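(* Let $P$ be a set of primes and let $T$ be a map with $\mathcal O_T=s_P$. Let $k\ge1$ and write its prime decomposition as $k=\prod_{p\in P}p^{a_p}\cdot\prod_{p\in Q}p^{a_p}$, where $Q$ is the set of primes dividing $k$ that are not in $P$ (so $P\cap Q=\emptyset$). Then for every $n\ge1$, \[ \mathcal O_{T^k}(n)=\begin{cases}\displaystyle\prod_{p\in Q,\,p\mid n}p^{a_p}\cdot\prod_{p\in Q,\,p\nmid n}\sigma(p^{a_p}) & \text{if } p\nmid n \text{ for all } p\in P,\\[2mm] 0 & \text{if } p\mid n \text{ for some } p\in P,\end{cases} \] where $\sigma$ is the sum-of-divisors function.
   Context: For a map $T:X\to X$, $\mathcal O_T(n)$ denotes the number of closed orbits of length $n$ under $T$ (sets $\{x,Tx,\dots,T^{n-1}x\}$ with $T^nx=x$ of cardinality exactly $n$); $T^k$ is the $k$th iterate. For a set $P$ of primes, $s_P$ is the sequence with $s_P(n)=0$ if $p\mid n$ for some $p\in P$, and $s_P(n)=1$ otherwise. *)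

theory Defs
  imports Main "HOL-Computational_Algebra.Primes"
begin

definition orbit_seg :: "('a \<Rightarrow> 'a) \<Rightarrow> nat \<Rightarrow> 'a \<Rightarrow> 'a set" where
  "orbit_seg T n x = (\<lambda>i. (T ^^ i) x) ` {..<n}"

definition closed_orbits :: "('a \<Rightarrow> 'a) \<Rightarrow> nat \<Rightarrow> 'a set set" where
  "closed_orbits T n = {orbit_seg T n x | x. (T ^^ n) x = x \<and> card (orbit_seg T n x) = n}"

text \<open>Number of closed orbits of length n (meaningful when the set is finite).\<close>
definition num_orbits :: "('a \<Rightarrow> 'a) \<Rightarrow> nat \<Rightarrow> nat" where
  "num_orbits T n = card (closed_orbits T n)"

definition s_seq :: "nat set \<Rightarrow> nat \<Rightarrow> nat" where
  "s_seq P n = (if \<exists>p\<in>P. p dvd n then 0 else 1)"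

definition divisor_sum :: "nat \<Rightarrow> nat" where
  "divisor_sum m = (\<Sum>d\<in>{d. d dvd m}. d)"

end

theory Submission
  imports Defs
begin

lemma divisor_sum_prime_power:
  assumes p: "prime (p::nat)"
  shows "divisor_sum (p ^ a) = (\<Sum>b\<le>a. p ^ b)"
proof -
  have "{d. d dvd p ^ a} = power p ` {..a}"
    using divides_primepow_nat[OF p] by auto
  moreover have "inj_on (power p) {..a}"
    using p by (intro inj_onI) (metis power_inject_exp prime_gt_1_nat)
  ultimately show ?thesis unfolding divisor_sum_def by (simp add: sum.reindex)
qed

definition wF :: "nat set \<Rightarrow> nat \<Rightarrow> nat \<Rightarrow> nat \<Rightarrow> nat" where
  "wF P n k g = (if (\<forall>q\<in>P. \<not> q dvd g) \<and> coprime n (k div g) then g else 0)"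

definition cF :: "nat set \<Rightarrow> nat \<Rightarrow> nat \<Rightarrow> nat \<Rightarrow> nat" where
  "cF P n k q = (if q \<in> P then 1 else if q dvd n then q ^ multiplicity q k
                 else divisor_sum (q ^ multiplicity q k))"

lemma arith_main:
  assumes P: "\<forall>p\<in>P. prime p" and nP: "\<forall>p\<in>P. \<not> p dvd n"
  shows "k \<ge> 1 \<Longrightarrow> (\<Sum>g\<in>{g. g dvd k}. wF P n k g) = (\<Prod>q\<in>{q. prime q \<and> q dvd k}. cF P n k q)"
proof (induction k rule: less_induct)
  case (less k)
  show ?case
  proof (cases "k = 1")
    case True
    have e1: "{q::nat. prime q \<and> q dvd k} = {}" using True by auto
    have e2: "{g::nat. g dvd k} = {1}" using True by auto
    have "1 \<notin> P" using P by auto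
    then show ?thesis unfolding e1 e2 using True by (simp add: wF_def)
  next
    case False
    then obtain p where p: "prime p" "p dvd k" using prime_factor_nat[of k] by auto
    define a where "a = multiplicity p k"
    obtain k' where k': "k = p ^ a * k'" "\<not> p dvd k'"
      using multiplicity_decompose'[of k p] less.prems p(1) unfolding a_def
      by (metis not_one_le_zero not_prime_unit)
    have k0: "k \<noteq> 0" "k' \<noteq> 0" using less.prems k' p(1) by (auto simp: prime_gt_0_nat)
    have a1: "a \<ge> 1" using p k0 unfolding a_def
      by (simp add: Suc_le_eq prime_multiplicity_gt_zero_iff)
    have p1: "p > 1" using p prime_gt_1_nat by blast
    have "p ^ a > 1" using p1 a1 by (metis One_nat_def Suc_le_eq one_less_power)
    hence klt: "k' < k" using k' k0 by simp
    have IH: "(\<Sum>g\<in>{g. g dvd k'}. wF P n k' g) = (\<Prod>q\<in>{q. prime q \<and> q dvd k'}. cF P n k' q)"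
      using less.IH[OF klt] k0 by simp
    define Fp where "Fp b = (if (p \<in> P \<longrightarrow> b = 0) \<and> coprime n (p ^ (a - b)) then p ^ b else 0)" for b
    have img: "{g. g dvd k} = (\<lambda>(b,h). p ^ b * h) ` ({..a} \<times> {h. h dvd k'})"
    proof (rule set_eqI, rule iffI)
      fix g assume "g \<in> {g. g dvd k}"
      then obtain u v where uv: "g = u * v" "u dvd p ^ a" "v dvd k'"
        using division_decomp[of g "p^a" k'] k' by auto
      then obtain b where "b \<le> a" "u = p ^ b" using divides_primepow_nat[OF p(1)] by auto
      thus "g \<in> (\<lambda>(b,h). p ^ b * h) ` ({..a} \<times> {h. h dvd k'})" using uv by auto
    next
      fix g assume "g \<in> (\<lambda>(b,h). p ^ b * h) ` ({..a} \<times> {h. h dvd k'})"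
      then obtain b h where "b \<le> a" "h dvd k'" "g = p ^ b * h" by auto
      thus "g \<in> {g. g dvd k}" using k' by (auto intro: mult_dvd_mono le_imp_power_dvd)
    qed
    have inj: "inj_on (\<lambda>(b,h). p ^ b * h) ({..a} \<times> {h. h dvd k'})"
    proof (rule inj_onI, clarsimp)
      fix b h c h'
      assume h: "h dvd k'" "h' dvd k'" and e: "p ^ b * h = p ^ c * h'"
      have nh: "\<not> p dvd h" "\<not> p dvd h'" using h k'(2) dvd_trans by blast+
      have h0: "h \<noteq> 0" "h' \<noteq> 0" using h k0 by auto
      have m: "multiplicity p h = 0" "multiplicity p h' = 0"
        using nh by (simp_all add: not_dvd_imp_multiplicity_0)
      have "multiplicity p (p ^ b * h) = b"
        using p h0 m by (simp add: prime_elem_multiplicity_mult_distrib)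
      moreover have "multiplicity p (p ^ c * h') = c"
        using p h0 m by (simp add: prime_elem_multiplicity_mult_distrib)
      ultimately have "b = c" using e by simp
      thus "b = c \<and> h = h'" using e p1 by simp
    qed
    have split: "wF P n k (p ^ b * h) = Fp b * wF P n k' h" if b: "b \<le> a" and h: "h dvd k'" for b h
    proof -
      have div: "k div (p ^ b * h) = p ^ (a - b) * (k' div h)"
      proof -
        obtain r where r: "k' = h * r" using h by auto
        have "p ^ a = p ^ (a - b) * p ^ b" using b by (simp add: power_add[symmetric])
        hence "k = (p ^ b * h) * (p ^ (a - b) * r)" using k' r by (simp add: ac_simps)
        thus ?thesis using r p1 k0 by auto
      qed
      have dv: "(\<forall>q\<in>P. \<not> q dvd p ^ b * h) \<longleftrightarrow> (p \<in> P \<longrightarrow> b = 0) \<and> (\<forall>q\<in>P. \<not> q dvd h)"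
      proof -
        have "q dvd p ^ b \<longleftrightarrow> q = p \<and> b > 0" if "q \<in> P" for q
        proof -
          have qp: "prime q" using P that by auto
          have "q dvd p \<longleftrightarrow> q = p" using qp p(1) by (metis primes_dvd_imp_eq dvd_refl)
          thus ?thesis by (cases "b = 0") (use qp in \<open>auto simp: prime_dvd_power_iff\<close>)
        qed
        hence B: "(\<forall>q\<in>P. \<not> q dvd p ^ b) \<longleftrightarrow> (p \<in> P \<longrightarrow> b = 0)" by auto
        have "q dvd p ^ b * h \<longleftrightarrow> q dvd p ^ b \<or> q dvd h" if "q \<in> P" for q
          using P that prime_dvd_mult_iff by blast
        thus ?thesis using B by blast
      qed
      show ?thesis unfolding wF_def Fp_def div dv by auto
    qed
    have "(\<Sum>g\<in>{g. g dvd k}. wF P n k g) = (\<Sum>x\<in>{..a} \<times> {h. h dvd k'}. wF P n k (p ^ fst x * snd x))"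
      unfolding img by (subst sum.reindex[OF inj]) (simp add: case_prod_beta)
    also have "\<dots> = (\<Sum>x\<in>{..a} \<times> {h. h dvd k'}. Fp (fst x) * wF P n k' (snd x))"
      by (rule sum.cong) (auto simp: split)
    also have "\<dots> = (\<Sum>b\<le>a. Fp b) * (\<Sum>h\<in>{h. h dvd k'}. wF P n k' h)"
      by (simp add: sum_product sum.cartesian_product case_prod_beta)
    finally have S: "(\<Sum>g\<in>{g. g dvd k}. wF P n k g) = (\<Sum>b\<le>a. Fp b) * (\<Sum>h\<in>{h. h dvd k'}. wF P n k' h)" .
    have Fsum: "(\<Sum>b\<le>a. Fp b) = cF P n k p"
    proof -
      have ma: "multiplicity p k = a" by (simp add: a_def)
      have cop: "coprime n (p ^ j) \<longleftrightarrow> j = 0 \<or> \<not> p dvd n" for j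
        using p prime_imp_coprime[of p n] by (cases j) (auto simp: coprime_commute)
      show ?thesis
      proof (cases "p \<in> P")
        case True
        hence "\<not> p dvd n" using nP by auto
        hence "Fp b = (if b = 0 then 1 else 0)" for b using True cop unfolding Fp_def by auto
        hence "(\<Sum>b\<le>a. Fp b) = 1" by (simp add: sum.delta)
        thus ?thesis using True by (simp add: cF_def)
      next
        case nP': False
        show ?thesis
        proof (cases "p dvd n")
          case True
          hence "Fp b = (if b = a then p ^ a else 0)" if "b \<le> a" for b
            using nP' cop that unfolding Fp_def by auto
          hence "(\<Sum>b\<le>a. Fp b) = (\<Sum>b\<le>a. if b = a then p ^ a else 0)" by (intro sum.cong) auto
          also have "\<dots> = p ^ a" by (simp add: sum.delta')
          finally show ?thesis using True nP' ma by (simp add: cF_def)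
        next
          case False
          hence "Fp b = p ^ b" for b using nP' cop unfolding Fp_def by auto
          thus ?thesis using False nP' ma p by (simp add: cF_def divisor_sum_prime_power)
        qed
      qed
    qed
    have setk: "{q. prime q \<and> q dvd k} = insert p {q. prime q \<and> q dvd k'}"
      using k' p a1 by (auto simp: prime_dvd_mult_iff prime_dvd_power_iff dest: primes_dvd_imp_eq)
    have fin: "finite {q::nat. prime q \<and> q dvd k'}"
      by (rule finite_subset[of _ "{..k'}"]) (use k0 in \<open>auto dest: dvd_imp_le\<close>)
    have pn: "p \<notin> {q. prime q \<and> q dvd k'}" using k' by auto
    have ceq: "cF P n k q = cF P n k' q" if q: "q \<in> {q. prime q \<and> q dvd k'}" for q
    proof -
      have "q \<noteq> p" using q pn by auto
      hence "\<not> q dvd p ^ a" using q p a1 by (auto simp: prime_dvd_power_iff dest: primes_dvd_imp_eq)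
      hence "multiplicity q (p ^ a) = 0" by (simp add: not_dvd_imp_multiplicity_0)
      hence "multiplicity q k = multiplicity q k'"
        using q k' k0 p1 by (simp add: prime_elem_multiplicity_mult_distrib)
      thus ?thesis by (simp add: cF_def)
    qed
    have "(\<Prod>q\<in>{q. prime q \<and> q dvd k}. cF P n k q) = cF P n k p * (\<Prod>q\<in>{q. prime q \<and> q dvd k'}. cF P n k q)"
      unfolding setk using fin pn by simp
    also have "\<dots> = cF P n k p * (\<Prod>q\<in>{q. prime q \<and> q dvd k'}. cF P n k' q)"
      using ceq by (metis (no_types, lifting) prod.cong)
    finally show ?thesis using S Fsum IH by simp
  qed
qed


lemma fpa: "(f ^^ a) ((f ^^ b) x) = (f ^^ (a + b)) x"
  by (simp add: funpow_add)

definition is_per :: "('a \<Rightarrow> 'a) \<Rightarrow> nat \<Rightarrow> 'a \<Rightarrow> bool" where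
  "is_per f m x \<longleftrightarrow> m \<ge> 1 \<and> (f ^^ m) x = x \<and> (\<forall>j. 0 < j \<and> j < m \<longrightarrow> (f ^^ j) x \<noteq> x)"

lemma fix_mult: "(f ^^ j) x = x \<Longrightarrow> (f ^^ (j * q)) x = x"
proof (induction q)
  case 0 then show ?case by simp
next
  case (Suc q)
  have "(f ^^ (j * Suc q)) x = (f ^^ j) ((f ^^ (j * q)) x)" by (simp add: fpa)
  then show ?case using Suc by simp
qed

lemma fix_mod: "(f ^^ j) x = x \<Longrightarrow> (f ^^ i) x = (f ^^ (i mod j)) x"
proof -
  assume h: "(f ^^ j) x = x"
  have "i = i mod j + j * (i div j)" by simp
  hence "(f ^^ i) x = (f ^^ (i mod j)) ((f ^^ (j * (i div j))) x)" by (metis fpa)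
  thus ?thesis using fix_mult[OF h] by simp
qed

lemma per_dvd: "is_per f m x \<Longrightarrow> (f ^^ j) x = x \<longleftrightarrow> m dvd j"
proof -
  assume p: "is_per f m x"
  hence m: "m \<ge> 1" "(f ^^ m) x = x" "\<And>j. 0 < j \<Longrightarrow> j < m \<Longrightarrow> (f ^^ j) x \<noteq> x"
    unfolding is_per_def by auto
  have e: "(f ^^ j) x = (f ^^ (j mod m)) x" by (rule fix_mod[OF m(2)])
  show ?thesis
  proof
    assume "(f ^^ j) x = x"
    hence "(f ^^ (j mod m)) x = x" using e by simp
    hence "\<not> (0 < j mod m)" using m(3)[of "j mod m"] m(1) by auto
    thus "m dvd j" by (simp add: dvd_eq_mod_eq_0)
  next
    assume "m dvd j"
    thus "(f ^^ j) x = x" using e by simp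
  qed
qed

lemma per_char: "n \<ge> 1 \<Longrightarrow> (\<And>j. (f ^^ j) x = x \<longleftrightarrow> n dvd j) \<Longrightarrow> is_per f n x"
  unfolding is_per_def by (auto dest: dvd_imp_le)

lemma per_unique: "is_per f m x \<Longrightarrow> is_per f m' x \<Longrightarrow> m = m'"
  using per_dvd[of f m x m'] per_dvd[of f m' x m] unfolding is_per_def
  by (auto intro: dvd_antisym)

lemma closed_iff:
  assumes m: "m \<ge> 1"
  shows "((f ^^ m) x = x \<and> card (orbit_seg f m x) = m) \<longleftrightarrow> is_per f m x"
proof
  assume h: "(f ^^ m) x = x \<and> card (orbit_seg f m x) = m"
  have mn: "(f ^^ j) x \<noteq> x" if j: "0 < j \<and> j < m" for j
  proof
    assume fj: "(f ^^ j) x = x"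
    have "orbit_seg f m x \<subseteq> (\<lambda>i. (f ^^ i) x) ` {..<j}"
    proof
      fix z assume "z \<in> orbit_seg f m x"
      then obtain i where "z = (f ^^ i) x" unfolding orbit_seg_def by auto
      hence "z = (f ^^ (i mod j)) x" using fix_mod[OF fj] by simp
      moreover have "i mod j < j" using j by simp
      ultimately show "z \<in> (\<lambda>i. (f ^^ i) x) ` {..<j}" by blast
    qed
    hence "card (orbit_seg f m x) \<le> card ((\<lambda>i. (f ^^ i) x) ` {..<j})"
      by (intro card_mono) auto
    also have "\<dots> \<le> j" using card_image_le[of "{..<j}" "\<lambda>i. (f ^^ i) x"] by simp
    finally show False using h j by simp
  qed
  show "is_per f m x" unfolding is_per_def using mn h m by blast
next
  assume p: "is_per f m x"
  hence m2: "(f ^^ m) x = x" unfolding is_per_def by auto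
  have "inj_on (\<lambda>i. (f ^^ i) x) {..<m}"
  proof (rule linorder_inj_onI')
    fix i j assume ij0: "i \<in> {..<m}" "j \<in> {..<m}" "i < j"
    show "(f ^^ i) x \<noteq> (f ^^ j) x"
    proof
      assume e: "(f ^^ i) x = (f ^^ j) x"
      have ij: "i < j" "j < m" using ij0 by auto
      have "(f ^^ (m - j + i)) x = (f ^^ (m - j)) ((f ^^ i) x)" by (simp add: fpa)
      also have "\<dots> = (f ^^ (m - j)) ((f ^^ j) x)" using e by simp
      also have "\<dots> = (f ^^ m) x" using ij by (simp add: fpa)
      finally have "(f ^^ (m - j + i)) x = x" using m2 by simp
      moreover have "0 < m - j + i" "m - j + i < m" using ij by auto
      ultimately show False using p unfolding is_per_def by blast
    qed
  qed
  hence "card (orbit_seg f m x) = m" unfolding orbit_seg_def by (simp add: card_image)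
  thus "(f ^^ m) x = x \<and> card (orbit_seg f m x) = m" using m2 by simp
qed

lemma orbit_same:
  assumes p: "is_per f m x" and y: "y \<in> orbit_seg f m x"
  shows "is_per f m y \<and> orbit_seg f m y = orbit_seg f m x"
proof -
  obtain i where i: "i < m" "y = (f ^^ i) x" using y unfolding orbit_seg_def by auto
  have m: "m \<ge> 1" "(f ^^ m) x = x" using p unfolding is_per_def by auto
  have xy: "x = (f ^^ (m - i)) y" using i m by (simp add: fpa)
  have eqv: "(f ^^ j) y = y \<longleftrightarrow> (f ^^ j) x = x" for j
  proof
    assume "(f ^^ j) y = y"
    hence "(f ^^ (m - i)) ((f ^^ j) y) = x" using xy by simp
    thus "(f ^^ j) x = x" using xy by (simp add: fpa add.commute)
  next
    assume "(f ^^ j) x = x"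
    hence "(f ^^ i) ((f ^^ j) x) = y" using i by simp
    thus "(f ^^ j) y = y" using i by (simp add: fpa add.commute)
  qed
  have py: "is_per f m y" using p unfolding is_per_def eqv by simp
  have "orbit_seg f m y = orbit_seg f m x"
  proof
    show "orbit_seg f m y \<subseteq> orbit_seg f m x"
    proof
      fix z assume "z \<in> orbit_seg f m y"
      then obtain l where l: "l < m" "z = (f ^^ l) y" unfolding orbit_seg_def by auto
      have "z = (f ^^ (l + i)) x" using l i by (simp add: fpa)
      also have "\<dots> = (f ^^ ((l + i) mod m)) x" by (rule fix_mod[OF m(2)])
      finally show "z \<in> orbit_seg f m x" unfolding orbit_seg_def using m by auto
    qed
  next
    show "orbit_seg f m x \<subseteq> orbit_seg f m y"
    proof
      fix z assume "z \<in> orbit_seg f m x"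
      then obtain t where t: "t < m" "z = (f ^^ t) x" unfolding orbit_seg_def by auto
      have "z = (f ^^ (t + (m - i))) y" using t xy by (simp add: fpa)
      also have "\<dots> = (f ^^ ((t + (m - i)) mod m)) y"
        by (rule fix_mod) (use py in \<open>simp add: is_per_def\<close>)
      finally show "z \<in> orbit_seg f m y" unfolding orbit_seg_def using m by auto
    qed
  qed
  thus ?thesis using py by simp
qed

definition PP :: "('a \<Rightarrow> 'a) \<Rightarrow> nat \<Rightarrow> 'a set" where
  "PP f m = {x. is_per f m x}"

lemma closed_orbits_eq: "m \<ge> 1 \<Longrightarrow> closed_orbits f m = orbit_seg f m ` PP f m"
  unfolding closed_orbits_def PP_def using closed_iff[of m f] by auto

lemma PP_Union: "m \<ge> 1 \<Longrightarrow> PP f m = \<Union> (closed_orbits f m)"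
proof -
  assume m: "m \<ge> 1"
  have "x \<in> orbit_seg f m x" for x unfolding orbit_seg_def using m
    by (auto intro: image_eqI[of _ _ 0])
  thus ?thesis unfolding closed_orbits_eq[OF m] PP_def using orbit_same[of f m] by blast
qed

lemma count_orbits:
  assumes m: "m \<ge> 1"
  shows "finite (closed_orbits f m) \<longleftrightarrow> finite (PP f m)"
    and "finite (closed_orbits f m) \<Longrightarrow> card (PP f m) = m * num_orbits f m"
proof -
  have fo: "finite A \<and> card A = m" if Ain: "A \<in> closed_orbits f m" for A
  proof -
    obtain x where "is_per f m x" "A = orbit_seg f m x"
      using Ain closed_orbits_eq[OF m, of f] unfolding PP_def by auto
    thus ?thesis using closed_iff[OF m, of f x] m by (auto simp: orbit_seg_def)
  qed
  show "finite (closed_orbits f m) \<longleftrightarrow> finite (PP f m)"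
  proof
    assume "finite (closed_orbits f m)"
    thus "finite (PP f m)" unfolding PP_Union[OF m] using fo by auto
  next
    assume "finite (PP f m)"
    thus "finite (closed_orbits f m)" unfolding closed_orbits_eq[OF m] by simp
  qed
  assume fin: "finite (closed_orbits f m)"
  have disj: "pairwise disjnt (closed_orbits f m)"
  proof (rule pairwiseI)
    fix A B assume A: "A \<in> closed_orbits f m" and B: "B \<in> closed_orbits f m" and ne: "A \<noteq> B"
    obtain x where x: "is_per f m x" "A = orbit_seg f m x"
      using A closed_orbits_eq[OF m, of f] unfolding PP_def by auto
    obtain x' where x': "is_per f m x'" "B = orbit_seg f m x'"
      using B closed_orbits_eq[OF m, of f] unfolding PP_def by auto
    show "disjnt A B"
    proof (rule ccontr)
      assume "\<not> disjnt A B"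
      then obtain y where "y \<in> A" "y \<in> B" unfolding disjnt_def by auto
      thus False using orbit_same[OF x(1)] orbit_same[OF x'(1)] x x' ne by metis
    qed
  qed
  have "card (PP f m) = sum card (closed_orbits f m)"
    unfolding PP_Union[OF m] by (rule card_Union_disjoint[OF disj]) (use fo in auto)
  also have "\<dots> = (\<Sum>A\<in>closed_orbits f m. m)" using fo by (intro sum.cong) auto
  finally show "card (PP f m) = m * num_orbits f m" by (simp add: num_orbits_def)
qed

lemma exists_per:
  assumes "n \<ge> 1" "(f ^^ n) x = x"
  shows "\<exists>m. is_per f m x"
proof -
  define m where "m = (LEAST j. 0 < j \<and> (f ^^ j) x = x)"
  have "0 < m \<and> (f ^^ m) x = x" unfolding m_def by (rule LeastI[of _ n]) (use assms in auto)
  moreover have "\<And>j. 0 < j \<and> j < m \<Longrightarrow> (f ^^ j) x \<noteq> x"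
    unfolding m_def using not_less_Least by blast
  ultimately show ?thesis unfolding is_per_def by (intro exI[of _ m]) auto
qed

lemma per_power:
  assumes p: "is_per f m x" and k: "k \<ge> 1"
  shows "is_per (f ^^ k) (m div gcd m k) x"
proof -
  have m1: "m \<ge> 1" using p unfolding is_per_def by auto
  define g where "g = gcd m k"
  have g0: "g \<noteq> 0" using k by (simp add: g_def)
  obtain m' k' where mk: "m = m' * g" "k = k' * g" "coprime m' k'"
    using gcd_coprime_exists[of m k] g0 unfolding g_def by blast
  have md: "m div gcd m k = m'" using g0 mk(1) unfolding g_def[symmetric] by simp
  have "m' \<ge> 1" using m1 mk(1) by (cases m') auto
  moreover have "((f ^^ k) ^^ j) x = x \<longleftrightarrow> m' dvd j" for j
  proof -
    have "((f ^^ k) ^^ j) x = x \<longleftrightarrow> m dvd k * j" by (simp add: funpow_mult per_dvd[OF p])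
    also have "\<dots> \<longleftrightarrow> m' * g dvd (k' * j) * g" using mk(1,2) by (simp add: ac_simps)
    also have "\<dots> \<longleftrightarrow> m' dvd k' * j" using g0 by simp
    also have "\<dots> \<longleftrightarrow> m' dvd j" using mk(3) by (simp add: coprime_dvd_mult_right_iff)
    finally show ?thesis .
  qed
  ultimately show ?thesis unfolding md by (rule per_char)
qed

lemma PP_power:
  assumes k: "k \<ge> 1" and n: "n \<ge> 1"
  shows "PP (f ^^ k) n = (\<Union>m\<in>{m. m \<ge> 1 \<and> m div gcd m k = n}. PP f m)"
proof (rule set_eqI, rule iffI)
  fix x assume "x \<in> PP (f ^^ k) n"
  hence px: "is_per (f ^^ k) n x" unfolding PP_def by simp
  hence "((f ^^ k) ^^ n) x = x" unfolding is_per_def by blast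
  hence "(f ^^ (k * n)) x = x" by (simp add: funpow_mult)
  moreover have "k * n \<ge> 1" using k n by simp
  ultimately obtain m where pm: "is_per f m x" using exists_per[of "k * n" f x] by blast
  have "m div gcd m k = n" using per_unique[OF per_power[OF pm k] px] .
  moreover have "m \<ge> 1" using pm unfolding is_per_def by simp
  ultimately show "x \<in> (\<Union>m\<in>{m. m \<ge> 1 \<and> m div gcd m k = n}. PP f m)"
    using pm unfolding PP_def by auto
next
  fix x assume "x \<in> (\<Union>m\<in>{m. m \<ge> 1 \<and> m div gcd m k = n}. PP f m)"
  then obtain m where "m div gcd m k = n" "is_per f m x" unfolding PP_def by auto
  thus "x \<in> PP (f ^^ k) n" using per_power[OF _ k, of f m x] unfolding PP_def by simp
qed


lemma sum_M:
  assumes P: "\<forall>p\<in>P. prime p" and nP: "\<forall>p\<in>P. \<not> p dvd n" and k: "k \<ge> (1::nat)" and n: "n \<ge> 1"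
  shows "(\<Sum>m\<in>{m. m \<ge> 1 \<and> m div gcd m k = n}. m * s_seq P m) = n * (\<Sum>g\<in>{g. g dvd k}. wF P n k g)"
proof -
  define M where "M = {m. m \<ge> 1 \<and> m div gcd m k = n}"
  define good where "good m = (\<not> (\<exists>p\<in>P. p dvd m))" for m
  define cond where "cond g = ((\<forall>q\<in>P. \<not> q dvd g) \<and> coprime n (k div g))" for g
  have Msub: "M \<subseteq> {..n * k}"
  proof
    fix m assume "m \<in> M"
    hence mm: "m div gcd m k = n" unfolding M_def by auto
    have "m = m div gcd m k * gcd m k" by simp
    hence "m = n * gcd m k" using mm by simp
    moreover have "gcd m k \<le> k" using k by (simp add: gcd_le2_nat)
    ultimately show "m \<in> {..n * k}" by (metis atMost_iff mult_le_mono2)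
  qed
  hence finM: "finite M" by (rule finite_subset) simp
  have finD: "finite {g::nat. g dvd k}" using k by (simp add: finite_divisors_nat)
  have "(\<Sum>m\<in>M. m * s_seq P m) = (\<Sum>m\<in>M. if good m then m else 0)"
    by (intro sum.cong) (auto simp: s_seq_def good_def)
  also have "\<dots> = (\<Sum>m\<in>{m\<in>M. good m}. m)" using finM by (simp add: sum.inter_filter)
  also have "{m\<in>M. good m} = (\<lambda>g. n * g) ` {g\<in>{g. g dvd k}. cond g}"
  proof (rule set_eqI, rule iffI)
    fix m assume "m \<in> {m\<in>M. good m}"
    hence mM: "m \<ge> 1" "m div gcd m k = n" "good m" unfolding M_def by auto
    define g where "g = gcd m k"
    have g0: "g > 0" using k by (simp add: g_def)
    have mg: "m = n * g" using mM(2) unfolding g_def[symmetric]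
      by (metis dvd_div_mult_self g_def gcd_dvd1 mult.commute)
    have gk: "g dvd k" by (simp add: g_def)
    then obtain r where r: "k = g * r" by auto
    have "g * gcd n r = gcd (g * n) (g * r)" by (simp add: gcd_mult_distrib_nat)
    also have "\<dots> = gcd m k" using mg r by (simp add: ac_simps)
    also have "\<dots> = g" by (simp add: g_def)
    finally have "gcd n r = 1" using g0 by simp
    moreover have "k div g = r" using r g0 by simp
    moreover have "\<forall>q\<in>P. \<not> q dvd g" using mM(3) mg unfolding good_def by auto
    ultimately have "cond g" unfolding cond_def by (simp add: coprime_iff_gcd_eq_1)
    thus "m \<in> (\<lambda>g. n * g) ` {g\<in>{g. g dvd k}. cond g}" using gk mg by auto
  next
    fix m assume "m \<in> (\<lambda>g. n * g) ` {g\<in>{g. g dvd k}. cond g}"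
    then obtain g where g: "g dvd k" "cond g" "m = n * g" by auto
    obtain r where r: "k = g * r" using g(1) by auto
    have g0: "g > 0" using r k by (cases g) auto
    have "k div g = r" using r g0 by simp
    hence cop: "gcd n r = 1" using g(2) unfolding cond_def by (simp add: coprime_iff_gcd_eq_1)
    have "gcd m k = g * gcd n r" using g(3) r by (simp add: gcd_mult_distrib_nat mult.commute)
    hence gm: "gcd m k = g" using cop by simp
    have "m \<ge> 1" using g(3) g0 n by simp
    moreover have "m div gcd m k = n" using gm g(3) g0 by simp
    moreover have "good m"
    proof -
      have "\<not> q dvd m" if "q \<in> P" for q
      proof
        assume "q dvd m"
        hence "q dvd n \<or> q dvd g" using g(3) P that prime_dvd_mult_iff by blast
        thus False using nP g(2) that unfolding cond_def by blast
      qed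
      thus ?thesis unfolding good_def by blast
    qed
    ultimately show "m \<in> {m\<in>M. good m}" unfolding M_def by auto
  qed
  also have "(\<Sum>m\<in>(\<lambda>g. n * g) ` {g\<in>{g. g dvd k}. cond g}. m) = (\<Sum>g\<in>{g\<in>{g. g dvd k}. cond g}. n * g)"
    using n by (subst sum.reindex) (auto simp: inj_on_def)
  also have "\<dots> = (\<Sum>g\<in>{g. g dvd k}. if cond g then n * g else 0)"
    by (rule sum.inter_filter[OF finD])
  also have "\<dots> = n * (\<Sum>g\<in>{g. g dvd k}. wF P n k g)"
    by (subst sum_distrib_left, rule sum.cong) (auto simp: wF_def cond_def)
  finally show ?thesis unfolding M_def .
qed

lemma prod_cF:
  assumes P: "\<forall>p\<in>P. prime p" and k: "k \<ge> (1::nat)"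
  shows "(\<Prod>q\<in>{q. prime q \<and> q dvd k}. cF P n k q) =
         (\<Prod>p\<in>{p. prime p \<and> p dvd k \<and> p \<notin> P \<and> p dvd n}. p ^ multiplicity p k) *
         (\<Prod>p\<in>{p. prime p \<and> p dvd k \<and> p \<notin> P \<and> \<not> p dvd n}. divisor_sum (p ^ multiplicity p k))"
proof -
  define A where "A = {q::nat. prime q \<and> q dvd k}"
  define Q1 where "Q1 = {p. prime p \<and> p dvd k \<and> p \<notin> P \<and> p dvd n}"
  define Q2 where "Q2 = {p. prime p \<and> p dvd k \<and> p \<notin> P \<and> \<not> p dvd n}"
  have finA: "finite A" unfolding A_def
    by (rule finite_subset[of _ "{..k}"]) (use k in \<open>auto dest: dvd_imp_le\<close>)
  have sub: "Q1 \<union> Q2 \<subseteq> A" unfolding Q1_def Q2_def A_def by auto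
  have fin1: "finite Q1" "finite Q2" using sub finA finite_subset by blast+
  have "(\<Prod>q\<in>A. cF P n k q) = (\<Prod>q\<in>Q1 \<union> Q2. cF P n k q)"
    by (rule prod.mono_neutral_right[OF finA sub]) (auto simp: A_def Q1_def Q2_def cF_def)
  also have "\<dots> = (\<Prod>q\<in>Q1. cF P n k q) * (\<Prod>q\<in>Q2. cF P n k q)"
    by (rule prod.union_disjoint) (use fin1 in \<open>auto simp: Q1_def Q2_def\<close>)
  also have "(\<Prod>q\<in>Q1. cF P n k q) = (\<Prod>q\<in>Q1. q ^ multiplicity q k)"
    by (rule prod.cong) (auto simp: Q1_def cF_def)
  also have "(\<Prod>q\<in>Q2. cF P n k q) = (\<Prod>q\<in>Q2. divisor_sum (q ^ multiplicity q k))"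
    by (rule prod.cong) (auto simp: Q2_def cF_def)
  finally show ?thesis unfolding A_def Q1_def Q2_def .
qed

theorem lemma3p2:
  fixes T :: "'a \<Rightarrow> 'a" and P :: "nat set" and k n :: nat
  assumes P_primes: "\<forall>p\<in>P. prime p"
    and orbits: "\<forall>m\<ge>1. finite (closed_orbits T m) \<and> num_orbits T m = s_seq P m"
    and k: "k \<ge> 1" and n: "n \<ge> 1"
  shows "finite (closed_orbits (T ^^ k) n) \<and>
    num_orbits (T ^^ k) n =
      (if \<forall>p\<in>P. \<not> p dvd n then
         (\<Prod>p\<in>{p. prime p \<and> p dvd k \<and> p \<notin> P \<and> p dvd n}. p ^ multiplicity p k) *
         (\<Prod>p\<in>{p. prime p \<and> p dvd k \<and> p \<notin> P \<and> \<not> p dvd n}. divisor_sum (p ^ multiplicity p k))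
       else 0)"
proof -
  define M where "M = {m. m \<ge> 1 \<and> m div gcd m k = n}"
  have Msub: "M \<subseteq> {..n * k}"
  proof
    fix m assume "m \<in> M"
    hence mm: "m div gcd m k = n" unfolding M_def by auto
    have "m = m div gcd m k * gcd m k" by simp
    hence "m = n * gcd m k" using mm by simp
    moreover have "gcd m k \<le> k" using k by (simp add: gcd_le2_nat)
    ultimately show "m \<in> {..n * k}" by (metis atMost_iff mult_le_mono2)
  qed
  hence finM: "finite M" by (rule finite_subset) simp
  have finPP: "finite (PP T m)" and cPP: "card (PP T m) = m * s_seq P m" if "m \<in> M" for m
  proof -
    have m1: "m \<ge> 1" using that unfolding M_def by auto
    show "finite (PP T m)" using orbits m1 count_orbits(1)[OF m1, of T] by auto
    show "card (PP T m) = m * s_seq P m" using orbits m1 count_orbits(2)[OF m1, of T] by auto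
  qed
  have PPk: "PP (T ^^ k) n = (\<Union>m\<in>M. PP T m)" unfolding M_def by (rule PP_power[OF k n])
  have disj: "\<forall>i\<in>M. \<forall>j\<in>M. i \<noteq> j \<longrightarrow> PP T i \<inter> PP T j = {}"
    unfolding PP_def by (auto dest: per_unique)
  have finK: "finite (PP (T ^^ k) n)" unfolding PPk using finM finPP by auto
  have cardK: "card (PP (T ^^ k) n) = (\<Sum>m\<in>M. m * s_seq P m)"
    unfolding PPk by (subst card_UN_disjoint[OF finM _ disj]) (use finPP cPP in auto)
  have finO: "finite (closed_orbits (T ^^ k) n)" using count_orbits(1)[OF n] finK by blast
  have E: "n * num_orbits (T ^^ k) n = (\<Sum>m\<in>M. m * s_seq P m)"
    using count_orbits(2)[OF n finO] cardK by simp
  show ?thesis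
  proof (cases "\<forall>p\<in>P. \<not> p dvd n")
    case True
    have "n * num_orbits (T ^^ k) n = n * (\<Prod>q\<in>{q. prime q \<and> q dvd k}. cF P n k q)"
      using E sum_M[OF P_primes True k n] arith_main[OF P_primes True k] unfolding M_def by simp
    hence "num_orbits (T ^^ k) n = (\<Prod>q\<in>{q. prime q \<and> q dvd k}. cF P n k q)" using n by simp
    thus ?thesis using finO True prod_cF[OF P_primes k, of n] by simp
  next
    case False
    then obtain p where p: "p \<in> P" "p dvd n" by auto
    have z: "m * s_seq P m = 0" if "m \<in> M" for m
    proof -
      have md: "m div gcd m k = n" using that unfolding M_def by simp
      have "m = n * gcd m k" by (metis md dvd_div_mult_self gcd_dvd1 mult.commute)
      hence "p dvd m" using p(2) by (metis dvd_mult2)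
      thus ?thesis using p(1) by (auto simp: s_seq_def)
    qed
    have "(\<Sum>m\<in>M. m * s_seq P m) = 0" by (rule sum.neutral) (use z in blast)
    hence "n * num_orbits (T ^^ k) n = 0" using E by simp
    hence "num_orbits (T ^^ k) n = 0" using n by simp
    thus ?thesis by (subst if_not_P[OF False]) (use finO in simp)
  qed
qed

end
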